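(* Let $\mathbb{C}$ be a regular majority category. Then for any three reflexive relations $A,B,C$ on any object $X$ of $\mathbb{C}$, $(A\circ B)\cap(A\circ C)\leqslant A\circ(B\cap C)$.
   Context: A category is regular if it has finite limits and coequalizers of kernel pairs and regular epimorphisms are pullback-stable; morphisms factor as regular epi followed by mono. Relations on $X$ are subobjects of $X\times X$, reflexive if the diagonal factors through them; $\cap$ is intersection (pullback) of subobjects, $\leqslant$ the order on subobjects. For $w:S\to W$ and a subobject $A$ of $W$, $w\in_S A$ means $w$ factors through a representative of $A$. The composite $R\circ S$ of relations represented by $(r_1,r_2):R_0\to X\times Y$ and $(s_1,s_2):S_0\to Y\times Z$ is the image of $(r_1p_1,s_2p_2):P\to X\times Z$, $(P,p_1,p_2)$ the pullback of $s_1$ along $r_2$. A ternary relation $R\leqslant X\times Y\times Z$ is majority-selecting if for all $S$ and $x,x':S\to X$, $y,y':S\to Y$, $z,z':S\to Z$: $(x,y,z')\in_S R$, $(x,y',z)\in_S R$, $(x',y,z)\in_S R$ imply $(x,y,z)\in_S R$. A category with products is a majority category if all its ternary relations are majority-selecting. *)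

theory Defs
  imports Main
begin

text \<open>Limits, subobjects, relations etc. are defined from scratch
  by their universal properties; no choices of constructions are made.\<close>

record ('o, 'a) category =
  Obj :: "'o set"
  Arr :: "'a set"
  Dom :: "'a \<Rightarrow> 'o"
  Cod :: "'a \<Rightarrow> 'o"
  Cmp :: "'a \<Rightarrow> 'a \<Rightarrow> 'a"   (* Cmp C g f  is  g after f *)
  Ident :: "'o \<Rightarrow> 'a"

definition hom :: "('o, 'a) category \<Rightarrow> 'o \<Rightarrow> 'o \<Rightarrow> 'a set" where
  "hom C X Y = {f \<in> Arr C. Dom C f = X \<and> Cod C f = Y}"

definition is_cat :: "('o, 'a) category \<Rightarrow> bool" where
  "is_cat C \<longleftrightarrow>
     (\<forall>f \<in> Arr C. Dom C f \<in> Obj C \<and> Cod C f \<in> Obj C) \<and>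
     (\<forall>X \<in> Obj C. Ident C X \<in> hom C X X) \<and>
     (\<forall>f \<in> Arr C. \<forall>g \<in> Arr C. Cod C f = Dom C g \<longrightarrow>
         Cmp C g f \<in> hom C (Dom C f) (Cod C g)) \<and>
     (\<forall>f \<in> Arr C. Cmp C f (Ident C (Dom C f)) = f \<and> Cmp C (Ident C (Cod C f)) f = f) \<and>
     (\<forall>f \<in> Arr C. \<forall>g \<in> Arr C. \<forall>h \<in> Arr C. Cod C f = Dom C g \<longrightarrow> Cod C g = Dom C h \<longrightarrow>
         Cmp C h (Cmp C g f) = Cmp C (Cmp C h g) f)"

definition mono :: "('o, 'a) category \<Rightarrow> 'a \<Rightarrow> bool" where
  "mono C m \<longleftrightarrow> m \<in> Arr C \<and>
     (\<forall>f \<in> Arr C. \<forall>g \<in> Arr C. Cod C f = Dom C m \<longrightarrow> Cod C g = Dom C m \<longrightarrow>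
        Dom C f = Dom C g \<longrightarrow> Cmp C m f = Cmp C m g \<longrightarrow> f = g)"

definition is_terminal :: "('o, 'a) category \<Rightarrow> 'o \<Rightarrow> bool" where
  "is_terminal C T \<longleftrightarrow> T \<in> Obj C \<and> (\<forall>X \<in> Obj C. \<exists>!f. f \<in> hom C X T)"

definition is_product :: "('o, 'a) category \<Rightarrow> 'o \<Rightarrow> 'o \<Rightarrow> 'o \<Rightarrow> 'a \<Rightarrow> 'a \<Rightarrow> bool" where
  "is_product C X Y P p q \<longleftrightarrow> X \<in> Obj C \<and> Y \<in> Obj C \<and> p \<in> hom C P X \<and> q \<in> hom C P Y \<and>
     (\<forall>S \<in> Obj C. \<forall>f \<in> hom C S X. \<forall>g \<in> hom C S Y.
        \<exists>!h. h \<in> hom C S P \<and> Cmp C p h = f \<and> Cmp C q h = g)"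

definition is_product3 ::
  "('o, 'a) category \<Rightarrow> 'o \<Rightarrow> 'o \<Rightarrow> 'o \<Rightarrow> 'o \<Rightarrow> 'a \<Rightarrow> 'a \<Rightarrow> 'a \<Rightarrow> bool" where
  "is_product3 C X Y Z P p1 p2 p3 \<longleftrightarrow> X \<in> Obj C \<and> Y \<in> Obj C \<and> Z \<in> Obj C \<and>
     p1 \<in> hom C P X \<and> p2 \<in> hom C P Y \<and> p3 \<in> hom C P Z \<and>
     (\<forall>S \<in> Obj C. \<forall>f \<in> hom C S X. \<forall>g \<in> hom C S Y. \<forall>k \<in> hom C S Z.
        \<exists>!h. h \<in> hom C S P \<and> Cmp C p1 h = f \<and> Cmp C p2 h = g \<and> Cmp C p3 h = k)"

definition is_equalizer :: "('o, 'a) category \<Rightarrow> 'a \<Rightarrow> 'a \<Rightarrow> 'o \<Rightarrow> 'a \<Rightarrow> bool" where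
  "is_equalizer C f g E e \<longleftrightarrow> f \<in> Arr C \<and> g \<in> Arr C \<and> Dom C f = Dom C g \<and> Cod C f = Cod C g \<and>
     e \<in> hom C E (Dom C f) \<and> Cmp C f e = Cmp C g e \<and>
     (\<forall>h \<in> Arr C. Cod C h = Dom C f \<longrightarrow> Cmp C f h = Cmp C g h \<longrightarrow>
        (\<exists>!k. k \<in> hom C (Dom C h) E \<and> Cmp C e k = h))"

definition is_coequalizer :: "('o, 'a) category \<Rightarrow> 'a \<Rightarrow> 'a \<Rightarrow> 'o \<Rightarrow> 'a \<Rightarrow> bool" where
  "is_coequalizer C f g Q q \<longleftrightarrow> f \<in> Arr C \<and> g \<in> Arr C \<and> Dom C f = Dom C g \<and> Cod C f = Cod C g \<and>
     q \<in> hom C (Cod C f) Q \<and> Cmp C q f = Cmp C q g \<and>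
     (\<forall>h \<in> Arr C. Dom C h = Cod C f \<longrightarrow> Cmp C h f = Cmp C h g \<longrightarrow>
        (\<exists>!k. k \<in> hom C Q (Cod C h) \<and> Cmp C k q = h))"

text \<open>Pullback square \<open>f \<circ> p = g \<circ> q\<close> with apex \<open>P\<close>; \<open>q\<close> is the pullback of \<open>f\<close> along \<open>g\<close>.\<close>
definition is_pullback :: "('o, 'a) category \<Rightarrow> 'a \<Rightarrow> 'a \<Rightarrow> 'o \<Rightarrow> 'a \<Rightarrow> 'a \<Rightarrow> bool" where
  "is_pullback C f g P p q \<longleftrightarrow> f \<in> Arr C \<and> g \<in> Arr C \<and> Cod C f = Cod C g \<and>
     p \<in> hom C P (Dom C f) \<and> q \<in> hom C P (Dom C g) \<and> Cmp C f p = Cmp C g q \<and>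
     (\<forall>S \<in> Obj C. \<forall>u \<in> hom C S (Dom C f). \<forall>v \<in> hom C S (Dom C g).
        Cmp C f u = Cmp C g v \<longrightarrow>
        (\<exists>!h. h \<in> hom C S P \<and> Cmp C p h = u \<and> Cmp C q h = v))"

definition regular_epi :: "('o, 'a) category \<Rightarrow> 'a \<Rightarrow> bool" where
  "regular_epi C e \<longleftrightarrow> (\<exists>f g. is_coequalizer C f g (Cod C e) e)"

definition has_finite_limits :: "('o, 'a) category \<Rightarrow> bool" where
  "has_finite_limits C \<longleftrightarrow> (\<exists>T. is_terminal C T) \<and>
     (\<forall>X \<in> Obj C. \<forall>Y \<in> Obj C. \<exists>P p q. is_product C X Y P p q) \<and>
     (\<forall>f \<in> Arr C. \<forall>g \<in> Arr C. Dom C f = Dom C g \<longrightarrow> Cod C f = Cod C g \<longrightarrow>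
        (\<exists>E e. is_equalizer C f g E e))"

definition regular_category :: "('o, 'a) category \<Rightarrow> bool" where
  "regular_category C \<longleftrightarrow> is_cat C \<and> has_finite_limits C \<and>
     (\<comment> \<open>coequalizers of kernel pairs\<close>
      \<forall>f \<in> Arr C. \<forall>P p q. is_pullback C f f P p q \<longrightarrow> (\<exists>Q c. is_coequalizer C p q Q c)) \<and>
     (\<comment> \<open>regular epimorphisms are pullback-stable\<close>
      \<forall>e f P p q. regular_epi C e \<longrightarrow> is_pullback C e f P p q \<longrightarrow> regular_epi C q)"

text \<open>Generalized element \<open>(x,y,z) : S \<rightarrow> X\<times>Y\<times>Z\<close> lies in the relation represented by the
  mono \<open>m\<close> into the ternary product \<open>(P,p1,p2,p3)\<close>.\<close>
definition mem3 :: "('o, 'a) category \<Rightarrow> 'a \<Rightarrow> 'a \<Rightarrow> 'a \<Rightarrow> 'a \<Rightarrow> 'a \<Rightarrow> 'a \<Rightarrow> 'a \<Rightarrow> bool" where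
  "mem3 C p1 p2 p3 m x y z \<longleftrightarrow> (\<exists>u. u \<in> hom C (Dom C x) (Dom C m) \<and>
     Cmp C p1 (Cmp C m u) = x \<and> Cmp C p2 (Cmp C m u) = y \<and> Cmp C p3 (Cmp C m u) = z)"

definition majority_selecting :: "('o, 'a) category \<Rightarrow> 'a \<Rightarrow> 'a \<Rightarrow> 'a \<Rightarrow> 'a \<Rightarrow> bool" where
  "majority_selecting C p1 p2 p3 m \<longleftrightarrow>
     (\<forall>S \<in> Obj C. \<forall>x \<in> hom C S (Cod C p1). \<forall>x' \<in> hom C S (Cod C p1).
        \<forall>y \<in> hom C S (Cod C p2). \<forall>y' \<in> hom C S (Cod C p2).
        \<forall>z \<in> hom C S (Cod C p3). \<forall>z' \<in> hom C S (Cod C p3).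
        mem3 C p1 p2 p3 m x y z' \<longrightarrow> mem3 C p1 p2 p3 m x y' z \<longrightarrow> mem3 C p1 p2 p3 m x' y z \<longrightarrow>
        mem3 C p1 p2 p3 m x y z)"

definition majority_category :: "('o, 'a) category \<Rightarrow> bool" where
  "majority_category C \<longleftrightarrow> is_cat C \<and>
     (\<forall>X \<in> Obj C. \<forall>Y \<in> Obj C. \<exists>P p q. is_product C X Y P p q) \<and>
     (\<forall>X Y Z P p1 p2 p3 m. is_product3 C X Y Z P p1 p2 p3 \<longrightarrow> mono C m \<longrightarrow> Cod C m = P \<longrightarrow>
        majority_selecting C p1 p2 p3 m)"

text \<open>A (representative of a) relation on \<open>X\<close>: a mono into a product \<open>(P,p1,p2)\<close> of \<open>X\<close> with \<open>X\<close>.\<close>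
definition reflexive_rel :: "('o, 'a) category \<Rightarrow> 'o \<Rightarrow> 'a \<Rightarrow> 'a \<Rightarrow> 'a \<Rightarrow> bool" where
  "reflexive_rel C X p1 p2 m \<longleftrightarrow> (\<exists>u. u \<in> hom C X (Dom C m) \<and>
     Cmp C p1 (Cmp C m u) = Ident C X \<and> Cmp C p2 (Cmp C m u) = Ident C X)"

text \<open>\<open>m\<close> represents the composite \<open>R \<circ> S\<close> of the relations represented by \<open>r\<close> and \<open>s\<close>
  (all into the same product \<open>(P,p1,p2)\<close>): image, via a (regular epi, mono) factorization,
  of \<open>(r1 q1, s2 q2)\<close> where \<open>(Q,q1,q2)\<close> is a pullback of \<open>s1\<close> along \<open>r2\<close>.\<close>
definition rel_composite :: "('o, 'a) category \<Rightarrow> 'o \<Rightarrow> 'a \<Rightarrow> 'a \<Rightarrow> 'a \<Rightarrow> 'a \<Rightarrow> 'a \<Rightarrow> bool" where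
  "rel_composite C P p1 p2 r s m \<longleftrightarrow> mono C m \<and> Cod C m = P \<and>
     (\<exists>Q q1 q2 e. is_pullback C (Cmp C p2 r) (Cmp C p1 s) Q q1 q2 \<and>
        regular_epi C e \<and> e \<in> hom C Q (Dom C m) \<and>
        Cmp C p1 (Cmp C m e) = Cmp C (Cmp C p1 r) q1 \<and>
        Cmp C p2 (Cmp C m e) = Cmp C (Cmp C p2 s) q2)"

definition rel_inter :: "('o, 'a) category \<Rightarrow> 'a \<Rightarrow> 'a \<Rightarrow> 'a \<Rightarrow> bool" where
  "rel_inter C a b i \<longleftrightarrow> (\<exists>Q q1 q2. is_pullback C a b Q q1 q2 \<and> i = Cmp C a q1)"

definition sub_le :: "('o, 'a) category \<Rightarrow> 'a \<Rightarrow> 'a \<Rightarrow> bool" where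
  "sub_le C a b \<longleftrightarrow> (\<exists>u. u \<in> hom C (Dom C a) (Dom C b) \<and> Cmp C b u = a)"

end

theory Submission
  imports Defs
begin

locale rc =
  fixes C :: "('o,'a) category"
  assumes reg: "regular_category C"
begin

abbreviation cmp (infixr "\<cdot>" 55) where "g \<cdot> f \<equiv> Cmp C g f"

lemma cat: "is_cat C" using reg by (simp add: regular_category_def)

lemma dom_obj: "f \<in> Arr C \<Longrightarrow> Dom C f \<in> Obj C" using cat by (simp add: is_cat_def)
lemma cod_obj: "f \<in> Arr C \<Longrightarrow> Cod C f \<in> Obj C" using cat by (simp add: is_cat_def)

lemma comp_hom: "f \<in> Arr C \<Longrightarrow> g \<in> Arr C \<Longrightarrow> Cod C f = Dom C g \<Longrightarrow> g \<cdot> f \<in> hom C (Dom C f) (Cod C g)"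
  using cat by (simp add: is_cat_def)

lemma comp_arr[simp]: "f \<in> Arr C \<Longrightarrow> g \<in> Arr C \<Longrightarrow> Cod C f = Dom C g \<Longrightarrow> g \<cdot> f \<in> Arr C"
  using comp_hom by (simp add: hom_def)
lemma dom_comp[simp]: "f \<in> Arr C \<Longrightarrow> g \<in> Arr C \<Longrightarrow> Cod C f = Dom C g \<Longrightarrow> Dom C (g \<cdot> f) = Dom C f"
  using comp_hom by (simp add: hom_def)
lemma cod_comp[simp]: "f \<in> Arr C \<Longrightarrow> g \<in> Arr C \<Longrightarrow> Cod C f = Dom C g \<Longrightarrow> Cod C (g \<cdot> f) = Cod C g"
  using comp_hom by (simp add: hom_def)
lemma assoc[simp]: "f \<in> Arr C \<Longrightarrow> g \<in> Arr C \<Longrightarrow> h \<in> Arr C \<Longrightarrow> Cod C f = Dom C g \<Longrightarrow> Cod C g = Dom C h \<Longrightarrow>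
   (h \<cdot> g) \<cdot> f = h \<cdot> (g \<cdot> f)"
  using cat by (simp add: is_cat_def)

lemma id_hom: "X \<in> Obj C \<Longrightarrow> Ident C X \<in> hom C X X" using cat by (simp add: is_cat_def)
lemma id_right[simp]: "f \<in> Arr C \<Longrightarrow> Dom C f = X \<Longrightarrow> f \<cdot> Ident C X = f" using cat by (auto simp add: is_cat_def)
lemma id_left[simp]: "f \<in> Arr C \<Longrightarrow> Cod C f = X \<Longrightarrow> Ident C X \<cdot> f = f" using cat by (auto simp add: is_cat_def)

lemma hom_comp: "f \<in> hom C A B \<Longrightarrow> g \<in> hom C B D \<Longrightarrow> g \<cdot> f \<in> hom C A D"
  by (simp add: hom_def)

lemma ext: "g \<cdot> f = k \<Longrightarrow> f \<in> Arr C \<Longrightarrow> g \<in> Arr C \<Longrightarrow> Cod C f = Dom C g \<Longrightarrow> h \<in> Arr C \<Longrightarrow> Cod C h = Dom C f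
   \<Longrightarrow> g \<cdot> (f \<cdot> h) = k \<cdot> h"
proof -
  assume a: "g \<cdot> f = k" "f \<in> Arr C" "g \<in> Arr C" "Cod C f = Dom C g" "h \<in> Arr C" "Cod C h = Dom C f"
  have "(g \<cdot> f) \<cdot> h = g \<cdot> (f \<cdot> h)" using a by (intro assoc) auto
  then show ?thesis using a(1) by metis
qed

lemma eqD: "is_equalizer C f g E e \<Longrightarrow> f \<in> Arr C \<and> g \<in> Arr C \<and> Dom C f = Dom C g \<and> Cod C f = Cod C g \<and>
     e \<in> hom C E (Dom C f) \<and> f \<cdot> e = g \<cdot> e"
  unfolding is_equalizer_def by (elim conjE) (intro conjI)

lemma prodD: "is_product C X Y P p q \<Longrightarrow> X \<in> Obj C \<and> Y \<in> Obj C \<and> p \<in> hom C P X \<and> q \<in> hom C P Y"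
  unfolding is_product_def by (elim conjE) (intro conjI)

lemma pbD: "is_pullback C f g P p q \<Longrightarrow> f \<in> Arr C \<and> g \<in> Arr C \<and> Cod C f = Cod C g \<and>
     p \<in> hom C P (Dom C f) \<and> q \<in> hom C P (Dom C g) \<and> f \<cdot> p = g \<cdot> q"
  unfolding is_pullback_def by (elim conjE) (intro conjI)

lemma coeqD: "is_coequalizer C f g Q q \<Longrightarrow> f \<in> Arr C \<and> g \<in> Arr C \<and> Dom C f = Dom C g \<and> Cod C f = Cod C g \<and>
     q \<in> hom C (Cod C f) Q \<and> q \<cdot> f = q \<cdot> g"
  unfolding is_coequalizer_def by (elim conjE) (intro conjI)

lemma prod_uniq:
  assumes "is_product C X Y P p q" "h \<in> hom C S P" "h' \<in> hom C S P" "p \<cdot> h = p \<cdot> h'" "q \<cdot> h = q \<cdot> h'"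
  shows "h = h'"
proof -
  have S: "S \<in> Obj C" using assms(2) dom_obj by (auto simp: hom_def)
  have "p \<cdot> h \<in> hom C S X" "q \<cdot> h \<in> hom C S Y" using prodD[OF assms(1)] assms(2) hom_comp by auto
  then show ?thesis using assms S unfolding is_product_def by metis
qed

lemma prod_ex:
  assumes "is_product C X Y P p q" "f \<in> hom C S X" "g \<in> hom C S Y"
  shows "\<exists>h \<in> hom C S P. p \<cdot> h = f \<and> q \<cdot> h = g"
proof -
  have S: "S \<in> Obj C" using assms(2) dom_obj by (auto simp: hom_def)
  then show ?thesis using assms unfolding is_product_def by metis
qed

lemma pb_ex:
  assumes "is_pullback C f g P p q" "u \<in> hom C S (Dom C f)" "v \<in> hom C S (Dom C g)" "f \<cdot> u = g \<cdot> v"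
  shows "\<exists>h \<in> hom C S P. p \<cdot> h = u \<and> q \<cdot> h = v"
proof -
  have S: "S \<in> Obj C" using assms(2) dom_obj by (auto simp: hom_def)
  then show ?thesis using assms unfolding is_pullback_def by metis
qed

lemma pb_uniq:
  assumes pb: "is_pullback C f g P p q" and h: "h \<in> hom C S P" "h' \<in> hom C S P" "p \<cdot> h = p \<cdot> h'" "q \<cdot> h = q \<cdot> h'"
  shows "h = h'"
proof -
  have S: "S \<in> Obj C" using h dom_obj by (auto simp: hom_def)
  from pbD[OF pb] have *: "f \<in> Arr C" "g \<in> Arr C" "Cod C f = Cod C g" "p \<in> hom C P (Dom C f)" "q \<in> hom C P (Dom C g)" "f \<cdot> p = g \<cdot> q"
    by auto
  have u: "p \<cdot> h \<in> hom C S (Dom C f)" "q \<cdot> h \<in> hom C S (Dom C g)" using * h hom_comp by auto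
  have "f \<cdot> (p \<cdot> h) = (f \<cdot> p) \<cdot> h" using *(1-5) h(1) by (simp add: hom_def)
  also have "\<dots> = (g \<cdot> q) \<cdot> h" by (simp only: *(6))
  also have "\<dots> = g \<cdot> (q \<cdot> h)" using *(1-5) h(1) by (simp add: hom_def)
  finally have "f \<cdot> (p \<cdot> h) = g \<cdot> (q \<cdot> h)" .
  then show ?thesis using pb S u h unfolding is_pullback_def by metis
qed

lemma prod_exists: "X \<in> Obj C \<Longrightarrow> Y \<in> Obj C \<Longrightarrow> \<exists>P p q. is_product C X Y P p q"
proof -
  have "\<forall>X \<in> Obj C. \<forall>Y \<in> Obj C. \<exists>P p q. is_product C X Y P p q"
    using reg by (simp add: regular_category_def has_finite_limits_def)
  then show "X \<in> Obj C \<Longrightarrow> Y \<in> Obj C \<Longrightarrow> \<exists>P p q. is_product C X Y P p q" by simp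
qed

lemma eq_exists: "f \<in> Arr C \<Longrightarrow> g \<in> Arr C \<Longrightarrow> Dom C f = Dom C g \<Longrightarrow> Cod C f = Cod C g \<Longrightarrow> \<exists>E e. is_equalizer C f g E e"
proof -
  have "\<forall>f \<in> Arr C. \<forall>g \<in> Arr C. Dom C f = Dom C g \<longrightarrow> Cod C f = Cod C g \<longrightarrow> (\<exists>E e. is_equalizer C f g E e)"
    using reg by (simp add: regular_category_def has_finite_limits_def)
  then show "f \<in> Arr C \<Longrightarrow> g \<in> Arr C \<Longrightarrow> Dom C f = Dom C g \<Longrightarrow> Cod C f = Cod C g \<Longrightarrow> \<exists>E e. is_equalizer C f g E e" by simp
qed

lemma pb_exists:
  assumes f: "f \<in> hom C A Z" and g: "g \<in> hom C B Z"
  shows "\<exists>P p q. is_pullback C f g P p q"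
proof -
  have AB: "A \<in> Obj C" "B \<in> Obj C" using f g dom_obj by (auto simp: hom_def)
  have "\<exists>Pr pa pb. is_product C A B Pr pa pb"
    using AB by (rule prod_exists)
  then obtain Pr pa pb where pr: "is_product C A B Pr pa pb" by blast
  have pa: "pa \<in> hom C Pr A" and pb: "pb \<in> hom C Pr B" using prodD[OF pr] by auto
  have fp: "f \<cdot> pa \<in> hom C Pr Z" "g \<cdot> pb \<in> hom C Pr Z" using f g pa pb hom_comp by auto
  have "f \<cdot> pa \<in> Arr C" "g \<cdot> pb \<in> Arr C" "Dom C (f \<cdot> pa) = Dom C (g \<cdot> pb)" "Cod C (f \<cdot> pa) = Cod C (g \<cdot> pb)"
    using fp by (auto simp: hom_def)
  then have "\<exists>E e. is_equalizer C (f \<cdot> pa) (g \<cdot> pb) E e"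
    by (rule eq_exists)
  then obtain E e where eq: "is_equalizer C (f \<cdot> pa) (g \<cdot> pb) E e" by blast
  have e: "e \<in> hom C E Pr" and ee: "(f \<cdot> pa) \<cdot> e = (g \<cdot> pb) \<cdot> e" using eqD[OF eq] fp by (auto simp: hom_def)
  have "is_pullback C f g E (pa \<cdot> e) (pb \<cdot> e)"
    unfolding is_pullback_def
  proof (intro conjI ballI impI)
    show "f \<in> Arr C" "g \<in> Arr C" "Cod C f = Cod C g" using f g by (auto simp: hom_def)
    show "pa \<cdot> e \<in> hom C E (Dom C f)" "pb \<cdot> e \<in> hom C E (Dom C g)" using f g e pa pb by (auto simp: hom_def)
    show "f \<cdot> (pa \<cdot> e) = g \<cdot> (pb \<cdot> e)" using ee f g e pa pb by (simp add: hom_def)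
  next
    fix S u v assume S: "S \<in> Obj C" and u: "u \<in> hom C S (Dom C f)" and v: "v \<in> hom C S (Dom C g)"
      and uv: "f \<cdot> u = g \<cdot> v"
    have u': "u \<in> hom C S A" and v': "v \<in> hom C S B" using u v f g by (auto simp: hom_def)
    obtain h where h: "h \<in> hom C S Pr" "pa \<cdot> h = u" "pb \<cdot> h = v" using prod_ex[OF pr u' v'] by blast
    have "(f \<cdot> pa) \<cdot> h = (g \<cdot> pb) \<cdot> h" using h uv f g pa pb by (simp add: hom_def)
    moreover have "h \<in> Arr C" "Cod C h = Dom C (f \<cdot> pa)" using h f pa by (auto simp: hom_def)
    moreover have "\<forall>h \<in> Arr C. Cod C h = Dom C (f \<cdot> pa) \<longrightarrow> (f \<cdot> pa) \<cdot> h = (g \<cdot> pb) \<cdot> h \<longrightarrow>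
        (\<exists>!k. k \<in> hom C (Dom C h) E \<and> e \<cdot> k = h)" using eq unfolding is_equalizer_def by blast
    ultimately have "\<exists>!k. k \<in> hom C (Dom C h) E \<and> e \<cdot> k = h" by blast
    then obtain k where k: "k \<in> hom C (Dom C h) E" "e \<cdot> k = h"
      "\<And>k'. k' \<in> hom C (Dom C h) E \<Longrightarrow> e \<cdot> k' = h \<Longrightarrow> k' = k"
      by blast
    have DS: "Dom C h = S" using h by (simp add: hom_def)
    show "\<exists>!h. h \<in> hom C S E \<and> (pa \<cdot> e) \<cdot> h = u \<and> (pb \<cdot> e) \<cdot> h = v"
    proof (rule ex1I[of _ k])
      show "k \<in> hom C S E \<and> (pa \<cdot> e) \<cdot> k = u \<and> (pb \<cdot> e) \<cdot> k = v"
        using k(1,2) h e pa pb DS by (auto simp: hom_def)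
    next
      fix k' assume k': "k' \<in> hom C S E \<and> (pa \<cdot> e) \<cdot> k' = u \<and> (pb \<cdot> e) \<cdot> k' = v"
      have "e \<cdot> k' = h"
        by (rule prod_uniq[OF pr _ h(1)]) (use k' e pa pb h in \<open>auto simp: hom_def\<close>)
      then show "k' = k" using k(3) k' DS by auto
    qed
  qed
  then show ?thesis by blast
qed


lemma coeq_univ: "is_coequalizer C f g Q q \<Longrightarrow> h \<in> Arr C \<Longrightarrow> Dom C h = Cod C f \<Longrightarrow> h \<cdot> f = h \<cdot> g \<Longrightarrow>
   \<exists>!k. k \<in> hom C Q (Cod C h) \<and> k \<cdot> q = h"
proof -
  assume a: "is_coequalizer C f g Q q" "h \<in> Arr C" "Dom C h = Cod C f" "h \<cdot> f = h \<cdot> g"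
  from a(1) have u: "\<forall>h \<in> Arr C. Dom C h = Cod C f \<longrightarrow> h \<cdot> f = h \<cdot> g \<longrightarrow>
        (\<exists>!k. k \<in> hom C Q (Cod C h) \<and> k \<cdot> q = h)"
    unfolding is_coequalizer_def by (elim conjE) assumption
  show ?thesis using u[rule_format, OF a(2-4)] .
qed

lemma repi_coeq: "regular_epi C e \<Longrightarrow> \<exists>f g. is_coequalizer C f g (Cod C e) e"
  by (simp add: regular_epi_def)

lemma repi_arr: "regular_epi C e \<Longrightarrow> e \<in> Arr C"
proof -
  assume "regular_epi C e"
  then obtain f g where "is_coequalizer C f g (Cod C e) e" using repi_coeq by blast
  then show "e \<in> Arr C" using coeqD by (simp add: hom_def)
qed

lemma repi_epi:
  assumes e: "regular_epi C e" and uv: "u \<in> Arr C" "v \<in> Arr C" "Dom C u = Cod C e" "Dom C v = Cod C e" "u \<cdot> e = v \<cdot> e"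
  shows "u = v"
proof -
  obtain f g where cq: "is_coequalizer C f g (Cod C e) e" using repi_coeq[OF e] by blast
  note D = coeqD[OF cq]
  have ea: "e \<in> Arr C" "Dom C e = Cod C f" using D by (auto simp: hom_def)
  have fa: "f \<in> Arr C" "g \<in> Arr C" "Cod C f = Cod C g" using D by auto
  have "(u \<cdot> e) \<cdot> f = u \<cdot> (e \<cdot> f)" using ea fa uv(1-4) by simp
  also have "\<dots> = u \<cdot> (e \<cdot> g)" using D by simp
  also have "\<dots> = (u \<cdot> e) \<cdot> g" using ea fa uv(1-4) by simp
  finally have hf: "(u \<cdot> e) \<cdot> f = (u \<cdot> e) \<cdot> g" .
  have "\<exists>!k. k \<in> hom C (Cod C e) (Cod C (u \<cdot> e)) \<and> k \<cdot> e = u \<cdot> e"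
    by (rule coeq_univ[OF cq]) (use ea uv hf in auto)
  moreover have "Cod C v = Cod C u"
    by (metis cod_comp ea(1) uv)
  ultimately show ?thesis using uv ea by (auto simp: hom_def)
qed

lemma repi_stable_pb: "regular_epi C e \<Longrightarrow> is_pullback C e f P p q \<Longrightarrow> regular_epi C q"
proof -
  from reg have "\<forall>e f P p q. regular_epi C e \<longrightarrow> is_pullback C e f P p q \<longrightarrow> regular_epi C q"
    unfolding regular_category_def by (elim conjE) assumption
  then show "regular_epi C e \<Longrightarrow> is_pullback C e f P p q \<Longrightarrow> regular_epi C q" by blast
qed

lemma repi_stable:
  assumes e: "regular_epi C e" and f: "f \<in> Arr C" "Cod C f = Cod C e"
  shows "\<exists>P p q. is_pullback C e f P p q \<and> regular_epi C q"
proof -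
  have "e \<in> hom C (Dom C e) (Cod C e)" "f \<in> hom C (Dom C f) (Cod C e)" using repi_arr[OF e] f by (auto simp: hom_def)
  then obtain P p q where "is_pullback C e f P p q" using pb_exists by blast
  then show ?thesis using repi_stable_pb[OF e] by blast
qed

lemma kp_coeq: "f \<in> Arr C \<Longrightarrow> is_pullback C f f P p q \<Longrightarrow> \<exists>Q c. is_coequalizer C p q Q c"
proof -
  from reg have "\<forall>f \<in> Arr C. \<forall>P p q. is_pullback C f f P p q \<longrightarrow> (\<exists>Q c. is_coequalizer C p q Q c)"
    unfolding regular_category_def by (elim conjE) assumption
  then show "f \<in> Arr C \<Longrightarrow> is_pullback C f f P p q \<Longrightarrow> \<exists>Q c. is_coequalizer C p q Q c" by blast
qed

lemma monoD: "mono C m \<Longrightarrow> u \<in> Arr C \<Longrightarrow> v \<in> Arr C \<Longrightarrow> Cod C u = Dom C m \<Longrightarrow> Cod C v = Dom C m \<Longrightarrow>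
   Dom C u = Dom C v \<Longrightarrow> m \<cdot> u = m \<cdot> v \<Longrightarrow> u = v"
  unfolding mono_def by (elim conjE) (drule bspec[of _ _ u], assumption, drule bspec[of _ _ v], assumption, blast)

lemma mono_arr: "mono C m \<Longrightarrow> m \<in> Arr C" unfolding mono_def by (elim conjE)

lemma diag:
  assumes e: "regular_epi C e" "e \<in> hom C A B" and m: "mono C m" and h: "h \<in> hom C B (Cod C m)"
    and w: "w \<in> hom C A (Dom C m)" and eq: "m \<cdot> w = h \<cdot> e"
  shows "\<exists>k \<in> hom C B (Dom C m). m \<cdot> k = h"
proof -
  obtain f g where cq: "is_coequalizer C f g (Cod C e) e" using repi_coeq[OF e(1)] by blast
  note D = coeqD[OF cq]
  have CB: "Cod C e = B" using e by (simp add: hom_def)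
  have fa: "f \<in> Arr C" "g \<in> Arr C" "Cod C f = A" "Cod C g = A" "Dom C f = Dom C g" using D e by (auto simp: hom_def)
  have ma: "m \<in> Arr C" using mono_arr[OF m] .
  have "m \<cdot> (w \<cdot> f) = (m \<cdot> w) \<cdot> f" using fa ma w by (simp add: hom_def)
  also have "\<dots> = (h \<cdot> e) \<cdot> f" using eq by simp
  also have "\<dots> = h \<cdot> (e \<cdot> f)" using fa e h by (simp add: hom_def)
  also have "\<dots> = h \<cdot> (e \<cdot> g)" using D by simp
  also have "\<dots> = (h \<cdot> e) \<cdot> g" using fa e h by (simp add: hom_def)
  also have "\<dots> = (m \<cdot> w) \<cdot> g" using eq by simp
  also have "\<dots> = m \<cdot> (w \<cdot> g)" using fa ma w by (simp add: hom_def)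
  finally have mw: "m \<cdot> (w \<cdot> f) = m \<cdot> (w \<cdot> g)" .
  have wfg: "w \<cdot> f = w \<cdot> g" apply (rule monoD[OF m]) using fa ma w mw by (auto simp: hom_def)
  have "\<exists>!k. k \<in> hom C (Cod C e) (Cod C w) \<and> k \<cdot> e = w"
    apply (rule coeq_univ[OF cq]) using fa w wfg by (auto simp: hom_def)
  then obtain k where k: "k \<in> hom C B (Dom C m)" "k \<cdot> e = w" using CB w by (auto simp: hom_def)
  have "(m \<cdot> k) \<cdot> e = m \<cdot> (k \<cdot> e)" using k ma e by (simp add: hom_def)
  also have "\<dots> = h \<cdot> e" using k eq by simp
  finally have mk: "(m \<cdot> k) \<cdot> e = h \<cdot> e" .
  have "m \<cdot> k = h"
    apply (rule repi_epi[OF e(1)]) using k ma h CB mk by (auto simp: hom_def)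
  then show ?thesis using k by blast
qed


lemma image:
  assumes f: "f \<in> hom C A B"
  shows "\<exists>M e m. regular_epi C e \<and> e \<in> hom C A M \<and> mono C m \<and> m \<in> hom C M B \<and> m \<cdot> e = f"
proof -
  obtain K k1 k2 where kp: "is_pullback C f f K k1 k2" using pb_exists[OF f f] by blast
  have fa: "f \<in> Arr C" "Dom C f = A" "Cod C f = B" using f by (auto simp: hom_def)
  obtain Q q where cq: "is_coequalizer C k1 k2 Q q" using kp_coeq[OF fa(1) kp] by blast
  have k: "k1 \<in> hom C K A" "k2 \<in> hom C K A" "f \<cdot> k1 = f \<cdot> k2" using pbD[OF kp] fa by auto
  have q: "q \<in> hom C A Q" "q \<cdot> k1 = q \<cdot> k2" using coeqD[OF cq] k by (auto simp: hom_def)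
  have rq: "regular_epi C q" unfolding regular_epi_def using cq q by (auto simp: hom_def)
  have "\<exists>!m. m \<in> hom C Q (Cod C f) \<and> m \<cdot> q = f"
    apply (rule coeq_univ[OF cq]) using fa k by (auto simp: hom_def)
  then obtain m where m: "m \<in> hom C Q B" "m \<cdot> q = f" using fa by auto
  obtain L l1 l2 where kl: "is_pullback C m m L l1 l2" using pb_exists[OF m(1) m(1)] by blast
  have l: "l1 \<in> hom C L Q" "l2 \<in> hom C L Q" "m \<cdot> l1 = m \<cdot> l2" using pbD[OF kl] m by (auto simp: hom_def)
  have "\<exists>P1 a1 \<pi>. is_pullback C q l1 P1 a1 \<pi> \<and> regular_epi C \<pi>"
    apply (rule repi_stable[OF rq]) using l q by (auto simp: hom_def)
  then obtain P1 a1 \<pi> where pb1: "is_pullback C q l1 P1 a1 \<pi>" and r\<pi>: "regular_epi C \<pi>" by blast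
  have p1: "a1 \<in> hom C P1 A" "\<pi> \<in> hom C P1 L" "q \<cdot> a1 = l1 \<cdot> \<pi>" using pbD[OF pb1] l q by (auto simp: hom_def)
  have "\<exists>P2 a2 \<rho>. is_pullback C q (l2 \<cdot> \<pi>) P2 a2 \<rho> \<and> regular_epi C \<rho>"
    apply (rule repi_stable[OF rq]) using l q p1 by (auto simp: hom_def)
  then obtain P2 a2 \<rho> where pb2: "is_pullback C q (l2 \<cdot> \<pi>) P2 a2 \<rho>" and r\<rho>: "regular_epi C \<rho>" by blast
  have p2: "a2 \<in> hom C P2 A" "\<rho> \<in> hom C P2 P1" "q \<cdot> a2 = (l2 \<cdot> \<pi>) \<cdot> \<rho>"
    using pbD[OF pb2] l q p1 by (auto simp: hom_def)
  have E1: "q \<cdot> (a1 \<cdot> \<rho>) = l1 \<cdot> (\<pi> \<cdot> \<rho>)"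
    using ext[OF p1(3), of \<rho>] p1 p2 q l by (simp add: hom_def)
  have E2: "q \<cdot> a2 = l2 \<cdot> (\<pi> \<cdot> \<rho>)" using p2 l p1 by (simp add: hom_def)
  have E3: "m \<cdot> (l1 \<cdot> (\<pi> \<cdot> \<rho>)) = m \<cdot> (l2 \<cdot> (\<pi> \<cdot> \<rho>))"
    using ext[OF l(3), of "\<pi> \<cdot> \<rho>"] p1 p2 m l by (simp add: hom_def)
  have "f \<cdot> (a1 \<cdot> \<rho>) = (m \<cdot> q) \<cdot> (a1 \<cdot> \<rho>)" using m by simp
  also have "\<dots> = m \<cdot> (q \<cdot> (a1 \<cdot> \<rho>))" using m(1) q(1) p1(1,2) p2(1,2) by (simp add: hom_def)
  also have "\<dots> = m \<cdot> (q \<cdot> a2)" using E1 E2 E3 by simp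
  also have "\<dots> = (m \<cdot> q) \<cdot> a2" using m(1) q(1) p1(1,2) p2(1,2) by (simp add: hom_def)
  also have "\<dots> = f \<cdot> a2" using m by simp
  finally have fa2: "f \<cdot> (a1 \<cdot> \<rho>) = f \<cdot> a2" .
  have "a1 \<cdot> \<rho> \<in> hom C P2 (Dom C f)" "a2 \<in> hom C P2 (Dom C f)" using p1 p2 fa by (auto simp: hom_def)
  then obtain \<kappa> where \<kappa>: "\<kappa> \<in> hom C P2 K" "k1 \<cdot> \<kappa> = a1 \<cdot> \<rho>" "k2 \<cdot> \<kappa> = a2"
    using pb_ex[OF kp _ _ fa2] by blast
  have "q \<cdot> (a1 \<cdot> \<rho>) = q \<cdot> (k1 \<cdot> \<kappa>)" using \<kappa> by simp
  also have "\<dots> = (q \<cdot> k1) \<cdot> \<kappa>" using q(1) k(1,2) \<kappa>(1) by (simp add: hom_def)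
  also have "\<dots> = (q \<cdot> k2) \<cdot> \<kappa>" using q by simp
  also have "\<dots> = q \<cdot> (k2 \<cdot> \<kappa>)" using q(1) k(1,2) \<kappa>(1) by (simp add: hom_def)
  also have "\<dots> = q \<cdot> a2" using \<kappa> by simp
  finally have "l1 \<cdot> (\<pi> \<cdot> \<rho>) = l2 \<cdot> (\<pi> \<cdot> \<rho>)" using E1 E2 by simp
  then have "(l1 \<cdot> \<pi>) \<cdot> \<rho> = (l2 \<cdot> \<pi>) \<cdot> \<rho>" using l p1 p2 by (simp add: hom_def)
  then have "l1 \<cdot> \<pi> = l2 \<cdot> \<pi>"
    apply - apply (rule repi_epi[OF r\<rho>]) using l p1 p2 by (auto simp: hom_def)
  then have l12: "l1 = l2"
    apply - apply (rule repi_epi[OF r\<pi>]) using l p1 p2 by (auto simp: hom_def)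
  have mono: "mono C m"
    unfolding mono_def
  proof (intro conjI ballI impI)
    show "m \<in> Arr C" using m by (simp add: hom_def)
  next
    fix u v assume u: "u \<in> Arr C" and v: "v \<in> Arr C" and uv: "Cod C u = Dom C m" "Cod C v = Dom C m"
      "Dom C u = Dom C v" "m \<cdot> u = m \<cdot> v"
    have "u \<in> hom C (Dom C u) (Dom C m)" "v \<in> hom C (Dom C u) (Dom C m)" using u v uv by (auto simp: hom_def)
    then obtain h where "h \<in> hom C (Dom C u) L" "l1 \<cdot> h = u" "l2 \<cdot> h = v"
      using pb_ex[OF kl _ _ uv(4)] by blast
    then show "u = v" using l12 by simp
  qed
  show ?thesis using rq q m mono by blast
qed

lemma prod3_exists:
  assumes XYZ: "X \<in> Obj C" "Y \<in> Obj C" "Z \<in> Obj C"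
  shows "\<exists>P p1 p2 p3. is_product3 C X Y Z P p1 p2 p3"
proof -
  obtain W qy qz where w: "is_product C Y Z W qy qz" using prod_exists XYZ by blast
  have W: "W \<in> Obj C" "qy \<in> hom C W Y" "qz \<in> hom C W Z" using prodD[OF w] dom_obj by (auto simp: hom_def)
  obtain P r s where p: "is_product C X W P r s" using prod_exists XYZ W by blast
  have Pp: "r \<in> hom C P X" "s \<in> hom C P W" using prodD[OF p] by auto
  have "is_product3 C X Y Z P r (qy \<cdot> s) (qz \<cdot> s)"
    unfolding is_product3_def
  proof (intro conjI ballI)
    show "X \<in> Obj C" "Y \<in> Obj C" "Z \<in> Obj C" by (fact XYZ)+
    show "r \<in> hom C P X" "qy \<cdot> s \<in> hom C P Y" "qz \<cdot> s \<in> hom C P Z" using Pp W hom_comp by auto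
  next
    fix S f g k assume S: "S \<in> Obj C" and f: "f \<in> hom C S X" and g: "g \<in> hom C S Y" and k: "k \<in> hom C S Z"
    obtain h0 where h0: "h0 \<in> hom C S W" "qy \<cdot> h0 = g" "qz \<cdot> h0 = k" using prod_ex[OF w g k] by blast
    obtain h where h: "h \<in> hom C S P" "r \<cdot> h = f" "s \<cdot> h = h0" using prod_ex[OF p f h0(1)] by blast
    show "\<exists>!h. h \<in> hom C S P \<and> r \<cdot> h = f \<and> (qy \<cdot> s) \<cdot> h = g \<and> (qz \<cdot> s) \<cdot> h = k"
    proof (rule ex1I[of _ h])
      show "h \<in> hom C S P \<and> r \<cdot> h = f \<and> (qy \<cdot> s) \<cdot> h = g \<and> (qz \<cdot> s) \<cdot> h = k"
        using h h0 W Pp by (auto simp: hom_def)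
    next
      fix h' assume h': "h' \<in> hom C S P \<and> r \<cdot> h' = f \<and> (qy \<cdot> s) \<cdot> h' = g \<and> (qz \<cdot> s) \<cdot> h' = k"
      have "s \<cdot> h' = h0"
        apply (rule prod_uniq[OF w _ h0(1)]) using h' h0 W Pp by (auto simp: hom_def)
      then show "h' = h"
        apply - apply (rule prod_uniq[OF p _ h(1)]) using h' h by (auto simp: hom_def)
    qed
  qed
  then show ?thesis by blast
qed


lemma prod3D: "is_product3 C X Y Z P p1 p2 p3 \<Longrightarrow> X \<in> Obj C \<and> Y \<in> Obj C \<and> Z \<in> Obj C \<and>
     p1 \<in> hom C P X \<and> p2 \<in> hom C P Y \<and> p3 \<in> hom C P Z"
  unfolding is_product3_def by (elim conjE) (intro conjI)

lemma prod3_ex: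
  assumes "is_product3 C X Y Z P p1 p2 p3" "f \<in> hom C S X" "g \<in> hom C S Y" "k \<in> hom C S Z"
  shows "\<exists>h \<in> hom C S P. p1 \<cdot> h = f \<and> p2 \<cdot> h = g \<and> p3 \<cdot> h = k"
proof -
  have S: "S \<in> Obj C" using assms(2) dom_obj by (auto simp: hom_def)
  from assms(1) have "\<forall>S \<in> Obj C. \<forall>f \<in> hom C S X. \<forall>g \<in> hom C S Y. \<forall>k \<in> hom C S Z.
        \<exists>!h. h \<in> hom C S P \<and> p1 \<cdot> h = f \<and> p2 \<cdot> h = g \<and> p3 \<cdot> h = k"
    unfolding is_product3_def by (elim conjE) assumption
  then have "\<exists>!h. h \<in> hom C S P \<and> p1 \<cdot> h = f \<and> p2 \<cdot> h = g \<and> p3 \<cdot> h = k" using S assms(2-4) by blast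
  then show ?thesis by blast
qed

lemma postc: "L = R \<Longrightarrow> L \<cdot> Y = R \<cdot> Y" by simp

end

lemma maj_sel: "majority_category C \<Longrightarrow> is_product3 C X Y Z P p1 p2 p3 \<Longrightarrow> mono C m \<Longrightarrow> Cod C m = P
  \<Longrightarrow> majority_selecting C p1 p2 p3 m"
  unfolding majority_category_def by (elim conjE) blast

context rc
begin

lemma main:
  assumes maj: "majority_category C"
    and pr: "is_product C X X P p1 p2"
    and ma: "mono C a" "Cod C a = P" "reflexive_rel C X p1 p2 a"
    and mb: "mono C b" "Cod C b = P" "reflexive_rel C X p1 p2 b"
    and mc: "mono C c" "Cod C c = P" "reflexive_rel C X p1 p2 c"
    and cab: "rel_composite C P p1 p2 a b ab"
    and cac: "rel_composite C P p1 p2 a c ac"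
    and ibc: "rel_inter C b c bc"
    and cabc: "rel_composite C P p1 p2 a bc abc"
    and iabac: "rel_inter C ab ac i"
  shows "sub_le C i abc"
proof -
  have X: "X \<in> Obj C" and p: "p1 \<in> hom C P X" "p2 \<in> hom C P X" using prodD[OF pr] by auto
  have a: "a \<in> hom C (Dom C a) P" using mono_arr[OF ma(1)] ma(2) by (simp add: hom_def)
  have b: "b \<in> hom C (Dom C b) P" using mono_arr[OF mb(1)] mb(2) by (simp add: hom_def)
  have c: "c \<in> hom C (Dom C c) P" using mono_arr[OF mc(1)] mc(2) by (simp add: hom_def)
  obtain ra where ra: "ra \<in> hom C X (Dom C a)" "p1 \<cdot> (a \<cdot> ra) = Ident C X" "p2 \<cdot> (a \<cdot> ra) = Ident C X"
    using ma(3) unfolding reflexive_rel_def by blast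
  obtain rb where rb: "rb \<in> hom C X (Dom C b)" "p1 \<cdot> (b \<cdot> rb) = Ident C X" "p2 \<cdot> (b \<cdot> rb) = Ident C X"
    using mb(3) unfolding reflexive_rel_def by blast
  obtain rc where rc: "rc \<in> hom C X (Dom C c)" "p1 \<cdot> (c \<cdot> rc) = Ident C X" "p2 \<cdot> (c \<cdot> rc) = Ident C X"
    using mc(3) unfolding reflexive_rel_def by blast
  have refl: "\<And>r y S. r \<in> hom C X (Dom C d) \<Longrightarrow> d \<in> hom C (Dom C d) P \<Longrightarrow> p1 \<cdot> (d \<cdot> r) = Ident C X \<Longrightarrow>
     p2 \<cdot> (d \<cdot> r) = Ident C X \<Longrightarrow> y \<in> hom C S X \<Longrightarrow> p1 \<cdot> (d \<cdot> (r \<cdot> y)) = y \<and> p2 \<cdot> (d \<cdot> (r \<cdot> y)) = y" for d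
  proof -
    fix r y S assume h: "r \<in> hom C X (Dom C d)" "d \<in> hom C (Dom C d) P" "p1 \<cdot> (d \<cdot> r) = Ident C X"
      "p2 \<cdot> (d \<cdot> r) = Ident C X" "y \<in> hom C S X"
    have "p1 \<cdot> (d \<cdot> (r \<cdot> y)) = (p1 \<cdot> (d \<cdot> r)) \<cdot> y" using h(1,2,5) p by (simp add: hom_def)
    moreover have "p2 \<cdot> (d \<cdot> (r \<cdot> y)) = (p2 \<cdot> (d \<cdot> r)) \<cdot> y" using h(1,2,5) p by (simp add: hom_def)
    ultimately show "p1 \<cdot> (d \<cdot> (r \<cdot> y)) = y \<and> p2 \<cdot> (d \<cdot> (r \<cdot> y)) = y" using h(3,4,5) by (simp add: hom_def)
  qed
  obtain Qb s1 s2 eb where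
    ab: "mono C ab" "Cod C ab = P" and pbb: "is_pullback C (p2 \<cdot> a) (p1 \<cdot> b) Qb s1 s2" and reb: "regular_epi C eb"
    and eb: "eb \<in> hom C Qb (Dom C ab)" and ab1: "p1 \<cdot> (ab \<cdot> eb) = (p1 \<cdot> a) \<cdot> s1" and ab2: "p2 \<cdot> (ab \<cdot> eb) = (p2 \<cdot> b) \<cdot> s2"
    using cab unfolding rel_composite_def by blast
  obtain Qc t1 t2 ec where
    ac: "mono C ac" "Cod C ac = P" and pbc: "is_pullback C (p2 \<cdot> a) (p1 \<cdot> c) Qc t1 t2" and rec: "regular_epi C ec"
    and ec: "ec \<in> hom C Qc (Dom C ac)" and ac1: "p1 \<cdot> (ac \<cdot> ec) = (p1 \<cdot> a) \<cdot> t1" and ac2: "p2 \<cdot> (ac \<cdot> ec) = (p2 \<cdot> c) \<cdot> t2"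
    using cac unfolding rel_composite_def by blast
  obtain Qbc q1 q2 where pbbc: "is_pullback C b c Qbc q1 q2" and bc: "bc = b \<cdot> q1"
    using ibc unfolding rel_inter_def by blast
  obtain Qa o1 o2 eabc where
    abc: "mono C abc" "Cod C abc = P" and pba: "is_pullback C (p2 \<cdot> a) (p1 \<cdot> bc) Qa o1 o2" and reabc: "regular_epi C eabc"
    and eabc: "eabc \<in> hom C Qa (Dom C abc)" and abc1: "p1 \<cdot> (abc \<cdot> eabc) = (p1 \<cdot> a) \<cdot> o1" and abc2: "p2 \<cdot> (abc \<cdot> eabc) = (p2 \<cdot> bc) \<cdot> o2"
    using cabc unfolding rel_composite_def by blast
  obtain I r1 r2 where pbi: "is_pullback C ab ac I r1 r2" and i: "i = ab \<cdot> r1"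
    using iabac unfolding rel_inter_def by blast
  have abh: "ab \<in> hom C (Dom C ab) P" "ac \<in> hom C (Dom C ac) P" "abc \<in> hom C (Dom C abc) P"
    using mono_arr ab ac abc by (auto simp: hom_def)
  have sb: "s1 \<in> hom C Qb (Dom C a)" "s2 \<in> hom C Qb (Dom C b)" "(p2 \<cdot> a) \<cdot> s1 = (p1 \<cdot> b) \<cdot> s2"
    using pbD[OF pbb] a b p by (auto simp: hom_def)
  have tc: "t1 \<in> hom C Qc (Dom C a)" "t2 \<in> hom C Qc (Dom C c)" "(p2 \<cdot> a) \<cdot> t1 = (p1 \<cdot> c) \<cdot> t2"
    using pbD[OF pbc] a c p by (auto simp: hom_def)
  have qbc: "q1 \<in> hom C Qbc (Dom C b)" "q2 \<in> hom C Qbc (Dom C c)" "b \<cdot> q1 = c \<cdot> q2"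
    using pbD[OF pbbc] b c by (auto simp: hom_def)
  have bch: "bc \<in> hom C Qbc P" using bc qbc(1,2) b by (simp add: hom_def)
  have oa: "o1 \<in> hom C Qa (Dom C a)" "o2 \<in> hom C Qa Qbc"
    using pbD[OF pba] a bch p by (auto simp: hom_def)
  have ri: "r1 \<in> hom C I (Dom C ab)" "r2 \<in> hom C I (Dom C ac)" "ab \<cdot> r1 = ac \<cdot> r2"
    using pbD[OF pbi] abh by (auto simp: hom_def)
  have "\<exists>D1 d1 f1. is_pullback C eb r1 D1 d1 f1 \<and> regular_epi C f1"
    apply (rule repi_stable[OF reb]) using ri eb by (auto simp: hom_def)
  then obtain D1 d1 f1 where pb1: "is_pullback C eb r1 D1 d1 f1" and rf1: "regular_epi C f1" by blast
  have d1: "d1 \<in> hom C D1 Qb" "f1 \<in> hom C D1 I" "eb \<cdot> d1 = r1 \<cdot> f1"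
    using pbD[OF pb1] eb ri by (auto simp: hom_def)
  have "\<exists>D2 d2 f2. is_pullback C ec (r2 \<cdot> f1) D2 d2 f2 \<and> regular_epi C f2"
    apply (rule repi_stable[OF rec]) using ri(1,2) ec d1(1,2) by (auto simp: hom_def)
  then obtain D2 d2 f2 where pb2: "is_pullback C ec (r2 \<cdot> f1) D2 d2 f2" and rf2: "regular_epi C f2" by blast
  have d2: "d2 \<in> hom C D2 Qc" "f2 \<in> hom C D2 D1" "ec \<cdot> d2 = (r2 \<cdot> f1) \<cdot> f2"
    using pbD[OF pb2] ec ri(1,2) d1(1,2) by (auto simp: hom_def)
  note H = p a b c ra(1) rb(1) rc(1) abh sb(1,2) tc(1,2) qbc(1,2) bch oa ri(1,2) d1(1,2) d2(1,2) eb ec eabc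
  define x where "x = p1 \<cdot> (ab \<cdot> (r1 \<cdot> (f1 \<cdot> f2)))"
  define z where "z = p2 \<cdot> (ab \<cdot> (r1 \<cdot> (f1 \<cdot> f2)))"
  have xz: "x \<in> hom C D2 X" "z \<in> hom C D2 X" unfolding x_def z_def using H by (auto simp: hom_def)
  have A1: "p1 \<cdot> (ab \<cdot> (eb \<cdot> (d1 \<cdot> f2))) = p1 \<cdot> (a \<cdot> (s1 \<cdot> (d1 \<cdot> f2)))"
    using postc[OF ab1, of "d1 \<cdot> f2"] H by (simp add: hom_def)
  have A2: "p2 \<cdot> (ab \<cdot> (eb \<cdot> (d1 \<cdot> f2))) = p2 \<cdot> (b \<cdot> (s2 \<cdot> (d1 \<cdot> f2)))"
    using postc[OF ab2, of "d1 \<cdot> f2"] H by (simp add: hom_def)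
  have A3: "p2 \<cdot> (a \<cdot> (s1 \<cdot> (d1 \<cdot> f2))) = p1 \<cdot> (b \<cdot> (s2 \<cdot> (d1 \<cdot> f2)))"
    using postc[OF sb(3), of "d1 \<cdot> f2"] H by (simp add: hom_def)
  have B0: "eb \<cdot> (d1 \<cdot> f2) = r1 \<cdot> (f1 \<cdot> f2)"
    using postc[OF d1(3), of "f2"] H by (simp add: hom_def)
  have I1: "ab \<cdot> (r1 \<cdot> (f1 \<cdot> f2)) = ac \<cdot> (r2 \<cdot> (f1 \<cdot> f2))"
    using postc[OF ri(3), of "f1 \<cdot> f2"] H by (simp add: hom_def)
  have C1: "p1 \<cdot> (ac \<cdot> (ec \<cdot> d2)) = p1 \<cdot> (a \<cdot> (t1 \<cdot> d2))"
    using postc[OF ac1, of "d2"] H by (simp add: hom_def)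
  have C2: "p2 \<cdot> (ac \<cdot> (ec \<cdot> d2)) = p2 \<cdot> (c \<cdot> (t2 \<cdot> d2))"
    using postc[OF ac2, of "d2"] H by (simp add: hom_def)
  have C3: "p2 \<cdot> (a \<cdot> (t1 \<cdot> d2)) = p1 \<cdot> (c \<cdot> (t2 \<cdot> d2))"
    using postc[OF tc(3), of "d2"] H by (simp add: hom_def)
  have B1: "ec \<cdot> d2 = r2 \<cdot> (f1 \<cdot> f2)"
    using d2(3) H by (simp add: hom_def)
  have X1: "p1 \<cdot> (a \<cdot> (s1 \<cdot> (d1 \<cdot> f2))) = x"
    unfolding x_def using A1 B0 by simp
  have Z1: "p2 \<cdot> (b \<cdot> (s2 \<cdot> (d1 \<cdot> f2))) = z"
    unfolding z_def using A2 B0 by simp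
  have X2: "p1 \<cdot> (a \<cdot> (t1 \<cdot> d2)) = x"
    unfolding x_def using C1 B1 I1 by simp
  have Z2: "p2 \<cdot> (c \<cdot> (t2 \<cdot> d2)) = z"
    unfolding z_def using C2 B1 I1 by simp
  have "(p2 \<cdot> a) \<cdot> s1 \<in> hom C Qb X" "p1 \<cdot> c \<in> hom C (Dom C c) X" using H by (auto simp: hom_def)
  then obtain T v1 v2 where pbT: "is_pullback C ((p2 \<cdot> a) \<cdot> s1) (p1 \<cdot> c) T v1 v2" using pb_exists by blast
  have v: "v1 \<in> hom C T Qb" "v2 \<in> hom C T (Dom C c)" "((p2 \<cdot> a) \<cdot> s1) \<cdot> v1 = (p1 \<cdot> c) \<cdot> v2"
    using pbD[OF pbT] H by (auto simp: hom_def)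
  obtain P3 \<pi>1 \<pi>2 \<pi>3 where p3: "is_product3 C X X X P3 \<pi>1 \<pi>2 \<pi>3" using prod3_exists[OF X X X] by blast
  have \<pi>: "\<pi>1 \<in> hom C P3 X" "\<pi>2 \<in> hom C P3 X" "\<pi>3 \<in> hom C P3 X" using prod3D[OF p3] by auto
  have "p1 \<cdot> (a \<cdot> (s1 \<cdot> v1)) \<in> hom C T X" "p2 \<cdot> (b \<cdot> (s2 \<cdot> v1)) \<in> hom C T X" "p2 \<cdot> (c \<cdot> v2) \<in> hom C T X"
    using H v by (auto simp: hom_def)
  then obtain g where g: "g \<in> hom C T P3" "\<pi>1 \<cdot> g = p1 \<cdot> (a \<cdot> (s1 \<cdot> v1))" "\<pi>2 \<cdot> g = p2 \<cdot> (b \<cdot> (s2 \<cdot> v1))"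
    "\<pi>3 \<cdot> g = p2 \<cdot> (c \<cdot> v2)"
    using prod3_ex[OF p3] by blast
  obtain M e m where e: "regular_epi C e" "e \<in> hom C T M" and m: "mono C m" "m \<in> hom C M P3" "m \<cdot> e = g"
    using image[OF g(1)] by blast
  have ms: "majority_selecting C \<pi>1 \<pi>2 \<pi>3 m" using maj_sel[OF maj p3 m(1)] m(2) by (simp add: hom_def)
  note H2 = H v(1,2) \<pi> g(1) e(2) m(2)
  have memT: "mem3 C \<pi>1 \<pi>2 \<pi>3 m (p1 \<cdot> (a \<cdot> (s1 \<cdot> (v1 \<cdot> k)))) (p2 \<cdot> (b \<cdot> (s2 \<cdot> (v1 \<cdot> k)))) (p2 \<cdot> (c \<cdot> (v2 \<cdot> k)))"
    if k: "k \<in> hom C S T" for S k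
  proof -
    have "\<pi>1 \<cdot> (m \<cdot> (e \<cdot> k)) = p1 \<cdot> (a \<cdot> (s1 \<cdot> (v1 \<cdot> k)))"
      using postc[OF g(2), of k] postc[OF m(3), of k] H2 k by (simp add: hom_def)
    moreover have "\<pi>2 \<cdot> (m \<cdot> (e \<cdot> k)) = p2 \<cdot> (b \<cdot> (s2 \<cdot> (v1 \<cdot> k)))"
      using postc[OF g(3), of k] postc[OF m(3), of k] H2 k by (simp add: hom_def)
    moreover have "\<pi>3 \<cdot> (m \<cdot> (e \<cdot> k)) = p2 \<cdot> (c \<cdot> (v2 \<cdot> k))"
      using postc[OF g(4), of k] postc[OF m(3), of k] H2 k by (simp add: hom_def)
    moreover have "e \<cdot> k \<in> hom C (Dom C (p1 \<cdot> (a \<cdot> (s1 \<cdot> (v1 \<cdot> k))))) (Dom C m)"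
      using H2 k by (simp add: hom_def)
    ultimately show ?thesis unfolding mem3_def by blast
  qed
  have mkT: "mem3 C \<pi>1 \<pi>2 \<pi>3 m (p1 \<cdot> (a \<cdot> \<alpha>)) (p2 \<cdot> (b \<cdot> \<beta>)) (p2 \<cdot> (c \<cdot> \<gamma>))"
    if h: "\<alpha> \<in> hom C S (Dom C a)" "\<beta> \<in> hom C S (Dom C b)" "\<gamma> \<in> hom C S (Dom C c)"
      "p2 \<cdot> (a \<cdot> \<alpha>) = p1 \<cdot> (b \<cdot> \<beta>)" "p2 \<cdot> (a \<cdot> \<alpha>) = p1 \<cdot> (c \<cdot> \<gamma>)" for S \<alpha> \<beta> \<gamma>
  proof -
    have "(p2 \<cdot> a) \<cdot> \<alpha> = (p1 \<cdot> b) \<cdot> \<beta>" using h H2 by (simp add: hom_def)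
    moreover have "\<alpha> \<in> hom C S (Dom C (p2 \<cdot> a))" "\<beta> \<in> hom C S (Dom C (p1 \<cdot> b))" using h(1,2) H2 by (auto simp: hom_def)
    ultimately obtain k0 where k0: "k0 \<in> hom C S Qb" "s1 \<cdot> k0 = \<alpha>" "s2 \<cdot> k0 = \<beta>"
      using pb_ex[OF pbb] by blast
    have "((p2 \<cdot> a) \<cdot> s1) \<cdot> k0 = (p1 \<cdot> c) \<cdot> \<gamma>" using k0 h H2 by (simp add: hom_def)
    moreover have "k0 \<in> hom C S (Dom C ((p2 \<cdot> a) \<cdot> s1))" "\<gamma> \<in> hom C S (Dom C (p1 \<cdot> c))" using h(3) k0(1) H2 by (auto simp: hom_def)
    ultimately obtain k where k: "k \<in> hom C S T" "v1 \<cdot> k = k0" "v2 \<cdot> k = \<gamma>"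
      using pb_ex[OF pbT] by blast
    show ?thesis using memT[OF k(1)] k k0 by simp
  qed
  define y where "y = p2 \<cdot> (a \<cdot> (s1 \<cdot> (d1 \<cdot> f2)))"
  define y' where "y' = p2 \<cdot> (a \<cdot> (t1 \<cdot> d2))"
  have yy: "y \<in> hom C D2 X" "y' \<in> hom C D2 X" unfolding y_def y'_def using H by (auto simp: hom_def)
  have Ra: "p1 \<cdot> (a \<cdot> (ra \<cdot> w)) = w \<and> p2 \<cdot> (a \<cdot> (ra \<cdot> w)) = w" if "w \<in> hom C D2 X" for w
    using refl[OF ra(1) a ra(2,3) that] .
  have Rb: "p1 \<cdot> (b \<cdot> (rb \<cdot> w)) = w \<and> p2 \<cdot> (b \<cdot> (rb \<cdot> w)) = w" if "w \<in> hom C D2 X" for w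
    using refl[OF rb(1) b rb(2,3) that] .
  have Rc: "p1 \<cdot> (c \<cdot> (rc \<cdot> w)) = w \<and> p2 \<cdot> (c \<cdot> (rc \<cdot> w)) = w" if "w \<in> hom C D2 X" for w
    using refl[OF rc(1) c rc(2,3) that] .
  have M1: "mem3 C \<pi>1 \<pi>2 \<pi>3 m x z y"
  proof -
    have "mem3 C \<pi>1 \<pi>2 \<pi>3 m (p1 \<cdot> (a \<cdot> (s1 \<cdot> (d1 \<cdot> f2)))) (p2 \<cdot> (b \<cdot> (s2 \<cdot> (d1 \<cdot> f2)))) (p2 \<cdot> (c \<cdot> (rc \<cdot> y)))"
      apply (rule mkT) using H yy A3 Rc[OF yy(1)] by (auto simp: hom_def y_def)
    then show ?thesis using X1 Z1 Rc[OF yy(1)] by simp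
  qed
  have M2: "mem3 C \<pi>1 \<pi>2 \<pi>3 m x y' z"
  proof -
    have "mem3 C \<pi>1 \<pi>2 \<pi>3 m (p1 \<cdot> (a \<cdot> (t1 \<cdot> d2))) (p2 \<cdot> (b \<cdot> (rb \<cdot> y'))) (p2 \<cdot> (c \<cdot> (t2 \<cdot> d2)))"
      apply (rule mkT) using H yy C3 Rb[OF yy(2)] by (auto simp: hom_def y'_def)
    then show ?thesis using X2 Z2 Rb[OF yy(2)] by simp
  qed
  have M3: "mem3 C \<pi>1 \<pi>2 \<pi>3 m z z z"
  proof -
    have "mem3 C \<pi>1 \<pi>2 \<pi>3 m (p1 \<cdot> (a \<cdot> (ra \<cdot> z))) (p2 \<cdot> (b \<cdot> (rb \<cdot> z))) (p2 \<cdot> (c \<cdot> (rc \<cdot> z)))"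
      apply (rule mkT) using H xz Ra[OF xz(2)] Rb[OF xz(2)] Rc[OF xz(2)] by (auto simp: hom_def)
    then show ?thesis using Ra[OF xz(2)] Rb[OF xz(2)] Rc[OF xz(2)] by simp
  qed
  have D2o: "D2 \<in> Obj C" using xz dom_obj by (auto simp: hom_def)
  have Cpi: "Cod C \<pi>1 = X" "Cod C \<pi>2 = X" "Cod C \<pi>3 = X" using \<pi> by (auto simp: hom_def)
  from ms have "\<forall>S \<in> Obj C. \<forall>x \<in> hom C S X. \<forall>x' \<in> hom C S X.
        \<forall>y \<in> hom C S X. \<forall>y' \<in> hom C S X. \<forall>z \<in> hom C S X. \<forall>z' \<in> hom C S X.
        mem3 C \<pi>1 \<pi>2 \<pi>3 m x y z' \<longrightarrow> mem3 C \<pi>1 \<pi>2 \<pi>3 m x y' z \<longrightarrow> mem3 C \<pi>1 \<pi>2 \<pi>3 m x' y z \<longrightarrow>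
        mem3 C \<pi>1 \<pi>2 \<pi>3 m x y z"
    unfolding majority_selecting_def Cpi .
  then have "mem3 C \<pi>1 \<pi>2 \<pi>3 m x z z"
    using D2o xz yy M1 M2 M3 by blast
  then obtain u where u: "u \<in> hom C D2 M" "\<pi>1 \<cdot> (m \<cdot> u) = x" "\<pi>2 \<cdot> (m \<cdot> u) = z" "\<pi>3 \<cdot> (m \<cdot> u) = z"
    unfolding mem3_def using xz m(2) by (auto simp: hom_def)
  have "\<exists>D3 w f3. is_pullback C e u D3 w f3 \<and> regular_epi C f3"
    apply (rule repi_stable[OF e(1)]) using u(1) e(2) by (auto simp: hom_def)
  then obtain D3 w f3 where pb3: "is_pullback C e u D3 w f3" and rf3: "regular_epi C f3" by blast
  have wf: "w \<in> hom C D3 T" "f3 \<in> hom C D3 D2" "e \<cdot> w = u \<cdot> f3"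
    using pbD[OF pb3] e(2) u(1) by (auto simp: hom_def)
  note H3 = H2 wf(1,2) u(1)
  have "p1 \<cdot> (a \<cdot> (s1 \<cdot> (v1 \<cdot> w))) = \<pi>1 \<cdot> (g \<cdot> w)" using postc[OF g(2), of w] H3 by (simp add: hom_def)
  also have "\<dots> = \<pi>1 \<cdot> (m \<cdot> (e \<cdot> w))" using postc[OF m(3), of w] H3 by (simp add: hom_def)
  also have "\<dots> = \<pi>1 \<cdot> (m \<cdot> (u \<cdot> f3))" using wf(3) by simp
  also have "\<dots> = x \<cdot> f3" using postc[OF u(2), of f3] H3 by (simp add: hom_def)
  finally have G1: "p1 \<cdot> (a \<cdot> (s1 \<cdot> (v1 \<cdot> w))) = x \<cdot> f3" .
  have "p2 \<cdot> (b \<cdot> (s2 \<cdot> (v1 \<cdot> w))) = \<pi>2 \<cdot> (g \<cdot> w)" using postc[OF g(3), of w] H3 by (simp add: hom_def)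
  also have "\<dots> = \<pi>2 \<cdot> (m \<cdot> (e \<cdot> w))" using postc[OF m(3), of w] H3 by (simp add: hom_def)
  also have "\<dots> = \<pi>2 \<cdot> (m \<cdot> (u \<cdot> f3))" using wf(3) by simp
  also have "\<dots> = z \<cdot> f3" using postc[OF u(3), of f3] H3 by (simp add: hom_def)
  finally have G2: "p2 \<cdot> (b \<cdot> (s2 \<cdot> (v1 \<cdot> w))) = z \<cdot> f3" .
  have "p2 \<cdot> (c \<cdot> (v2 \<cdot> w)) = \<pi>3 \<cdot> (g \<cdot> w)" using postc[OF g(4), of w] H3 by (simp add: hom_def)
  also have "\<dots> = \<pi>3 \<cdot> (m \<cdot> (e \<cdot> w))" using postc[OF m(3), of w] H3 by (simp add: hom_def)
  also have "\<dots> = \<pi>3 \<cdot> (m \<cdot> (u \<cdot> f3))" using wf(3) by simp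
  also have "\<dots> = z \<cdot> f3" using postc[OF u(4), of f3] H3 by (simp add: hom_def)
  finally have G3: "p2 \<cdot> (c \<cdot> (v2 \<cdot> w)) = z \<cdot> f3" .
  have E1: "p2 \<cdot> (a \<cdot> (s1 \<cdot> (v1 \<cdot> w))) = p1 \<cdot> (b \<cdot> (s2 \<cdot> (v1 \<cdot> w)))"
    using postc[OF sb(3), of "v1 \<cdot> w"] H3 by (simp add: hom_def)
  have E2: "p2 \<cdot> (a \<cdot> (s1 \<cdot> (v1 \<cdot> w))) = p1 \<cdot> (c \<cdot> (v2 \<cdot> w))"
    using postc[OF v(3), of w] H3 by (simp add: hom_def)
  have bcw: "b \<cdot> (s2 \<cdot> (v1 \<cdot> w)) = c \<cdot> (v2 \<cdot> w)"
    apply (rule prod_uniq[OF pr, of _ D3])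
    using H3 E1 E2 G2 G3 by (auto simp: hom_def)
  have "s2 \<cdot> (v1 \<cdot> w) \<in> hom C D3 (Dom C b)" "v2 \<cdot> w \<in> hom C D3 (Dom C c)" using H3 by (auto simp: hom_def)
  then obtain j where j: "j \<in> hom C D3 Qbc" "q1 \<cdot> j = s2 \<cdot> (v1 \<cdot> w)" "q2 \<cdot> j = v2 \<cdot> w"
    using pb_ex[OF pbbc _ _ bcw] by blast
  have "(p2 \<cdot> a) \<cdot> (s1 \<cdot> (v1 \<cdot> w)) = (p1 \<cdot> bc) \<cdot> j" using H3 j E1 bc by (simp add: hom_def)
  moreover have "s1 \<cdot> (v1 \<cdot> w) \<in> hom C D3 (Dom C (p2 \<cdot> a))" "j \<in> hom C D3 (Dom C (p1 \<cdot> bc))"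
    using H3 j(1) by (auto simp: hom_def)
  ultimately obtain l where l: "l \<in> hom C D3 Qa" "o1 \<cdot> l = s1 \<cdot> (v1 \<cdot> w)" "o2 \<cdot> l = j"
    using pb_ex[OF pba] by blast
  have F1: "p1 \<cdot> (abc \<cdot> (eabc \<cdot> l)) = x \<cdot> f3"
    using postc[OF abc1, of l] H3 l G1 by (simp add: hom_def)
  have F2: "p2 \<cdot> (abc \<cdot> (eabc \<cdot> l)) = z \<cdot> f3"
    using postc[OF abc2, of l] H3 l j G2 bc by (simp add: hom_def)
  have F: "abc \<cdot> (eabc \<cdot> l) = (ab \<cdot> r1) \<cdot> ((f1 \<cdot> f2) \<cdot> f3)"
    apply (rule prod_uniq[OF pr, of _ D3])
    using H3 F1 F2 l(1) by (auto simp: hom_def x_def z_def)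
  have "\<exists>k \<in> hom C D2 (Dom C abc). abc \<cdot> k = (ab \<cdot> r1) \<cdot> (f1 \<cdot> f2)"
    apply (rule diag[OF rf3 wf(2) abc(1), of _ "eabc \<cdot> l"]) using H3 l(1) F abc(2) by (auto simp: hom_def)
  then obtain k3 where k3: "k3 \<in> hom C D2 (Dom C abc)" "abc \<cdot> k3 = (ab \<cdot> r1) \<cdot> (f1 \<cdot> f2)" by blast
  have "\<exists>k \<in> hom C D1 (Dom C abc). abc \<cdot> k = (ab \<cdot> r1) \<cdot> f1"
    apply (rule diag[OF rf2 d2(2) abc(1), of _ k3]) using H3 k3 abc(2) by (auto simp: hom_def)
  then obtain k2 where k2: "k2 \<in> hom C D1 (Dom C abc)" "abc \<cdot> k2 = (ab \<cdot> r1) \<cdot> f1" by blast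
  have "\<exists>k \<in> hom C I (Dom C abc). abc \<cdot> k = ab \<cdot> r1"
    apply (rule diag[OF rf1 d1(2) abc(1), of _ k2]) using H3 k2 abc(2) by (auto simp: hom_def)
  then obtain k1 where k1: "k1 \<in> hom C I (Dom C abc)" "abc \<cdot> k1 = ab \<cdot> r1" by blast
  have "Dom C i = I" using i H by (simp add: hom_def)
  then show ?thesis unfolding sub_le_def using k1 i by auto
qed

end

theorem lemma3p1:
  fixes C :: "('o, 'a) category"
  assumes "regular_category C" and "majority_category C"
    and "is_product C X X P p1 p2"
    and "mono C a" "Cod C a = P" "reflexive_rel C X p1 p2 a"
    and "mono C b" "Cod C b = P" "reflexive_rel C X p1 p2 b"
    and "mono C c" "Cod C c = P" "reflexive_rel C X p1 p2 c"
    and "rel_composite C P p1 p2 a b ab"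
    and "rel_composite C P p1 p2 a c ac"
    and "rel_inter C b c bc"
    and "rel_composite C P p1 p2 a bc abc"
    and "rel_inter C ab ac i"
  shows "sub_le C i abc"
proof -
  interpret rc C by unfold_locales (rule assms(1))
  show ?thesis by (rule main[OF assms(2-)])
qed

end
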